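(* With the height $H$ and distance $d$ on $Y_4$ described in the context, one has $$\alpha(Q,Y_4)=\alpha_{\mathrm{ess}}(Q)=2 .$$ Consequently $Y_4$ contains no locally accumulating subvariety for $Q$.
   Context: Let $Y_4$ be the smooth projective toric surface over $\mathbb{Q}$ obtained by blowing up $\mathbb{P}^1\times\mathbb{P}^1$ (coordinates $[x:y]\times[s:t]$) at the four torus-invariant points $[1:0]\times[1:0]$, $[0:1]\times[1:0]$, $[1:0]\times[0:1]$, $[0:1]\times[0:1]$; outside the exceptional divisors we keep the coordinates $[x:y]\times[s:t]$. Let $Q$ be the point lying over $[1:1]\times[1:1]$. For a rational point $P=[x:y]\times[s:t]$ off the exceptional divisors, written with integers satisfying $\gcd(x,y)=\gcd(s,t)=1$, the anticanonical Weil height is $$H(P)=\frac{\max(|x^2st|,|y^2st|,|t^2xy|,|s^2xy|)}{\gcd(x,s)\gcd(x,t)\gcd(y,s)\gcd(y,t)}.$$ Near $Q$ use affine coordinates $(w,z)=(y/x,t/s)$, the local diffeomorphism $\rho(P)=(w-1,z-1)\in\mathbb{R}^2$ and the distance $d(P)=\max(|w-1|,|z-1|)$. For a constructible subset $V\subset Y_4$, the approximation constant $\alpha(Q,V)$ is the supremum of the $\gamma>0$ for which there exists $C>0$ with $d(P)^\gamma H(P)\ge C$ for all $P\in V(\mathbb{Q})$, $P\neq Q$ (equivalently the infimum of the $\gamma>0$ for which there is a sequence $P_i\in V(\mathbb{Q})$ with $d(P_i)\to0$ and $d(P_i)^\gamma H(P_i)$ bounded). The essential constant is $\alpha_{\mathrm{ess}}(Q)=\sup_V\alpha(Q,V)$,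 $V$ ranging over dense Zariski open subsets of $Y_4$. A subvariety $Z$ is locally accumulating if $\alpha(Q,W)<\alpha_{\mathrm{ess}}(Q)$ for every dense open $W\subset Z$. *)

theory Defs
  imports "HOL-Analysis.Analysis" "HOL-Computational_Algebra.Polynomial"
begin

text \<open>Rational points of Y_4 in the affine chart x \<noteq> 0, s \<noteq> 0 near Q,
  written in the coordinates (w,z) = (y/x, t/s), off the exceptional divisor
  over [1:0]x[1:0], i.e. (w,z) \<noteq> (0,0).\<close>

definition chart_pts :: "(rat \<times> rat) set" where
  "chart_pts = {p. p \<noteq> (0, 0)}"

definition Qpt :: "rat \<times> rat" where
  "Qpt = (1, 1)"

text \<open>Coprime integer coordinates: w = y/x and z = t/s in lowest terms.\<close>
definition cx :: "rat \<Rightarrow> int" where "cx w = snd (quotient_of w)"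
definition cy :: "rat \<Rightarrow> int" where "cy w = fst (quotient_of w)"

definition height :: "rat \<times> rat \<Rightarrow> real" where
  "height p = (let x = cx (fst p); y = cy (fst p); s = cx (snd p); t = cy (snd p) in
     real_of_int (max (max (abs (x^2 * s*t)) (abs (y^2 * s*t))) (max (abs (t^2 * x*y)) (abs (s^2 * x*y))))
     / real_of_int (gcd x s * gcd x t * gcd y s * gcd y t))"

definition distQ :: "rat \<times> rat \<Rightarrow> real" where
  "distQ p = max \<bar>real_of_rat (fst p) - 1\<bar> \<bar>real_of_rat (snd p) - 1\<bar>"

definition alpha :: "(rat \<times> rat) set \<Rightarrow> ereal" where
  "alpha V = Inf (ereal ` {\<gamma>::real. \<gamma> > 0 \<and>
      (\<exists>P :: nat \<Rightarrow> rat \<times> rat. (\<forall>i. P i \<in> V \<and> P i \<in> chart_pts \<and> P i \<noteq> Qpt) \<and>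
         ((\<lambda>i. distQ (P i)) \<longlonglongrightarrow> 0) \<and>
         (\<exists>B. \<forall>i. distQ (P i) powr \<gamma> * height (P i) \<le> B))})"

definition eval2 :: "rat poly poly \<Rightarrow> rat \<times> rat \<Rightarrow> rat" where
  "eval2 f p = poly (poly f [:snd p:]) (fst p)"

text \<open>Dense Zariski open subsets of Y_4 (restricted to the chart) contain a set
  of the form {f \<noteq> 0} with f a nonzero polynomial, and conversely.\<close>
definition alpha_ess :: ereal where
  "alpha_ess = (SUP f \<in> {f :: rat poly poly. f \<noteq> 0}.
       alpha {p \<in> chart_pts. eval2 f p \<noteq> 0})"

definition zclosed :: "(rat \<times> rat) set \<Rightarrow> bool" where
  "zclosed A \<longleftrightarrow> (\<exists>S :: rat poly poly set. A = {p \<in> chart_pts. \<forall>f\<in>S. eval2 f p = 0})"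

definition zopen :: "(rat \<times> rat) set \<Rightarrow> bool" where
  "zopen U \<longleftrightarrow> U \<subseteq> chart_pts \<and> zclosed (chart_pts - U)"

definition subvariety :: "(rat \<times> rat) set \<Rightarrow> bool" where
  "subvariety Z \<longleftrightarrow> zclosed Z \<and> Z \<noteq> {} \<and>
     (\<forall>A B. zclosed A \<and> zclosed B \<and> Z = A \<union> B \<longrightarrow> Z = A \<or> Z = B)"

definition dense_open_in :: "(rat \<times> rat) set \<Rightarrow> (rat \<times> rat) set \<Rightarrow> bool" where
  "dense_open_in W Z \<longleftrightarrow> (\<exists>U. zopen U \<and> W = Z \<inter> U) \<and>
     (\<forall>C. zclosed C \<and> W \<subseteq> C \<longrightarrow> Z \<subseteq> C)"

definition locally_accumulating :: "(rat \<times> rat) set \<Rightarrow> bool" where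
  "locally_accumulating Z \<longleftrightarrow> subvariety Z \<and>
     (\<forall>W. dense_open_in W Z \<longrightarrow> alpha W < alpha_ess)"

end

theory Submission
  imports Defs
begin



lemma repr:
  fixes X Y :: int
  assumes "X > 0"
  shows "\<exists>l>0. X = l * cx (of_int Y / of_int X) \<and> Y = l * cy (of_int Y / of_int X)"
proof -
  obtain y x where q: "quotient_of (of_int Y / of_int X) = (y, x)" by (cases "quotient_of (of_int Y / of_int X)") auto
  have xp: "x > 0" using quotient_of_denom_pos[OF q] .
  have cop: "coprime y x" using quotient_of_coprime[OF q] .
  have e: "(of_int Y / of_int X :: rat) = of_int y / of_int x" using quotient_of_div[OF q] .
  have "rat_of_int (Y * x) = rat_of_int (y * X)"
    using e assms xp by (simp add: field_simps)
  hence e2: "Y * x = y * X" by (simp only: of_int_eq_iff)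
  have "x dvd y * X" using e2 by (metis dvd_triv_right)
  hence "x dvd X" using cop by (metis coprime_commute coprime_dvd_mult_right_iff)
  then obtain l where l: "X = x * l" by blast
  have lp: "l > 0" using l xp assms by (metis zero_less_mult_pos)
  have "Y * x = y * l * x" using e2 l by simp
  hence "Y = l * y" using xp by simp
  moreover have "cx (of_int Y / of_int X) = x" "cy (of_int Y / of_int X) = y" using q by (simp_all add: cx_def cy_def)
  ultimately show ?thesis using l lp by (intro exI[of _ l]) auto
qed

lemma dvd_g:
  fixes x y s t d :: int
  assumes "d dvd s * t" "d dvd x * y"
  shows "d dvd gcd x s * gcd x t * gcd y s * gcd y t"
proof -
  obtain d1 d2 where d: "d = d1 * d2" "d1 dvd s" "d2 dvd t" using assms(1) by (rule dvd_productE)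
  have "d1 dvd x * y" using assms(2) d by (metis dvd_mult_left)
  then obtain d11 d12 where d1: "d1 = d11 * d12" "d11 dvd x" "d12 dvd y" by (rule dvd_productE)
  have "d2 dvd x * y" using assms(2) d by (metis dvd_mult_right)
  then obtain d21 d22 where d2: "d2 = d21 * d22" "d21 dvd x" "d22 dvd y" by (rule dvd_productE)
  have "d11 dvd gcd x s" using d d1 by (metis dvd_mult_left gcd_greatest)
  moreover have "d12 dvd gcd y s" using d d1 by (metis dvd_mult_right gcd_greatest)
  moreover have "d21 dvd gcd x t" using d d2 by (metis dvd_mult_left gcd_greatest)
  moreover have "d22 dvd gcd y t" using d d2 by (metis dvd_mult_right gcd_greatest)
  ultimately have "d11 * d21 * d12 * d22 dvd gcd x s * gcd x t * gcd y s * gcd y t"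
    by (intro mult_dvd_mono) auto
  moreover have "d = d11 * d21 * d12 * d22" using d d1 d2 by (simp add: ac_simps)
  ultimately show ?thesis by simp
qed

lemma dvd_st:
  fixes x y s t d :: int
  assumes "coprime x y" "d dvd x^2 * s * t" "d dvd y^2 * s * t"
  shows "d dvd s * t"
proof -
  have "d dvd gcd ((s*t) * x^2) ((s*t) * y^2)" using assms by (simp add: ac_simps)
  also have "gcd ((s*t) * x^2) ((s*t) * y^2) = normalize ((s*t) * gcd (x^2) (y^2))" by (rule gcd_mult_left)
  also have "gcd (x^2) (y^2) = 1" using assms(1) by simp
  finally show ?thesis by simp
qed




definition M4 :: "int \<Rightarrow> int \<Rightarrow> int \<Rightarrow> int \<Rightarrow> int" where
  "M4 x y s t = max (max (abs (x^2 * s * t)) (abs (y^2 * s * t))) (max (abs (t^2 * x * y)) (abs (s^2 * x * y)))"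

lemma height_le:
  fixes X Y S T G :: int
  assumes X: "X > 0" and S: "S > 0" and G: "G > 0" and Y: "Y \<noteq> 0"
    and d1: "G dvd X^2 * S * T" and d2: "G dvd Y^2 * S * T" and d3: "G dvd T^2 * X * Y" and d4: "G dvd S^2 * X * Y"
  shows "height (of_int Y / of_int X, of_int T / of_int S) \<le> real_of_int (M4 X Y S T) / real_of_int G"
proof -
  define w where "w = (of_int Y / of_int X :: rat)"
  define z where "z = (of_int T / of_int S :: rat)"
  obtain l where l: "l > 0" "X = l * cx w" "Y = l * cy w" using repr[OF X] unfolding w_def by blast
  obtain m where m: "m > 0" "S = m * cx z" "T = m * cy z" using repr[OF S] unfolding z_def by blast
  define x where "x = cx w" define y where "y = cy w" define s where "s = cx z" define t where "t = cy z"
  have xp: "x > 0" unfolding x_def cx_def by (rule quotient_of_denom_pos')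
  have sp: "s > 0" unfolding s_def cx_def by (rule quotient_of_denom_pos')
  have cxy: "coprime x y" unfolding x_def y_def cx_def cy_def
    by (metis coprime_commute prod.collapse quotient_of_coprime)
  define g where "g = gcd x s * gcd x t * gcd y s * gcd y t"
  have "y \<noteq> 0" using Y l unfolding y_def by auto
  hence gp: "g > 0" unfolding g_def using xp sp by (simp add: zero_less_mult_iff)
  have hdef: "height (w, z) = real_of_int (M4 x y s t) / real_of_int g"
    unfolding height_def M4_def g_def x_def y_def s_def t_def Let_def by simp
  have L: "l^2 * m^2 > 0" using l m by simp
  have sc: "\<And>a. G dvd (l^2 * m^2) * a \<Longrightarrow> G dvd (l^2 * m^2) * a" by simp
  have E1: "X^2 * S * T = (l^2 * m^2) * (x^2 * s * t)" using l m unfolding x_def s_def t_def by (simp add: power2_eq_square ac_simps)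
  have E2: "Y^2 * S * T = (l^2 * m^2) * (y^2 * s * t)" using l m unfolding y_def s_def t_def by (simp add: power2_eq_square ac_simps)
  have E3: "T^2 * X * Y = (l^2 * m^2) * (t^2 * x * y)" using l m unfolding x_def y_def t_def by (simp add: power2_eq_square ac_simps)
  have E4: "S^2 * X * Y = (l^2 * m^2) * (s^2 * x * y)" using l m unfolding x_def y_def s_def by (simp add: power2_eq_square ac_simps)
  have "G dvd gcd ((l^2 * m^2) * (x^2 * s * t)) ((l^2 * m^2) * (y^2 * s * t))" using d1 d2 E1 E2 by simp
  also have "\<dots> = (l^2 * m^2) * gcd (x^2 * s * t) (y^2 * s * t)" using L by (simp add: gcd_mult_left)
  also have "gcd (x^2 * s * t) (y^2 * s * t) = gcd ((s * t) * x^2) ((s * t) * y^2)" by (simp add: ac_simps)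
  also have "\<dots> = abs (s * t)" using cxy by (simp add: gcd_mult_left)
  finally have A1: "G dvd (l^2 * m^2) * (s * t)" by (cases "s * t \<ge> 0") (simp_all add: abs_if)
  have cst: "coprime s t" unfolding s_def t_def cx_def cy_def
    by (metis coprime_commute prod.collapse quotient_of_coprime)
  have "G dvd gcd ((l^2 * m^2) * (t^2 * x * y)) ((l^2 * m^2) * (s^2 * x * y))" using d3 d4 E3 E4 by simp
  also have "\<dots> = (l^2 * m^2) * gcd (t^2 * x * y) (s^2 * x * y)" using L by (simp add: gcd_mult_left)
  also have "gcd (t^2 * x * y) (s^2 * x * y) = gcd ((x * y) * t^2) ((x * y) * s^2)" by (simp add: ac_simps)
  also have "\<dots> = abs (x * y)" using cst by (simp add: gcd_mult_left gcd.commute[of t s] coprime_iff_gcd_eq_1[symmetric])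
  finally have A2: "G dvd (l^2 * m^2) * (x * y)" by (cases "x * y \<ge> 0") (simp_all add: abs_if)
  have "G dvd gcd ((l^2 * m^2) * (s * t)) ((l^2 * m^2) * (x * y))" using A1 A2 by simp
  also have "\<dots> = (l^2 * m^2) * gcd (s * t) (x * y)" using L by (simp add: gcd_mult_left)
  finally have A3: "G dvd (l^2 * m^2) * gcd (s * t) (x * y)" .
  have "gcd (s * t) (x * y) dvd g" unfolding g_def by (rule dvd_g) auto
  hence "G dvd (l^2 * m^2) * g" using A3 by (meson dvd_trans mult_dvd_mono dvd_refl)
  hence Gle: "G \<le> (l^2 * m^2) * g" using L gp by (simp add: zdvd_imp_le)
  have MX: "M4 X Y S T = (l^2 * m^2) * M4 x y s t" using l m unfolding M4_def x_def y_def s_def t_def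
    by (simp add: power2_eq_square abs_mult ac_simps max_mult_distrib_left)
  have M0: "M4 x y s t \<ge> 0" unfolding M4_def by simp
  have "height (w,z) = real_of_int (M4 X Y S T) / real_of_int ((l^2 * m^2) * g)"
    unfolding hdef MX of_int_mult[of "l^2 * m^2"] using L by (subst mult_divide_mult_cancel_left) auto
  also have "\<dots> \<le> real_of_int (M4 X Y S T) / real_of_int G"
  proof (rule divide_left_mono)
    show "real_of_int G \<le> real_of_int ((l^2 * m^2) * g)" using Gle by (simp only: of_int_le_iff)
    show "0 \<le> real_of_int (M4 X Y S T)" using M0 MX L by simp
    have "real_of_int ((l^2 * m^2) * g) > 0" using L gp by (simp only: of_int_0_less_iff zero_less_mult_iff) simp
    thus "0 < real_of_int ((l^2 * m^2) * g) * real_of_int G" using G by simp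
  qed
  finally show ?thesis unfolding w_def z_def .
qed




lemma cq: "real_of_rat w = real_of_int (cy w) / real_of_int (cx w)" "cx w > 0" "coprime (cy w) (cx w)"
proof -
  obtain a b where q: "quotient_of w = (a, b)" by (cases "quotient_of w") auto
  show "real_of_rat w = real_of_int (cy w) / real_of_int (cx w)"
    using quotient_of_div[OF q] q by (simp add: cx_def cy_def of_rat_divide)
  show "cx w > 0" using quotient_of_denom_pos[OF q] q by (simp add: cx_def)
  show "coprime (cy w) (cx w)" using quotient_of_coprime[OF q] q by (simp add: cx_def cy_def)
qed

lemma gcd_pair_dvd:
  fixes x s t :: int assumes "coprime s t"
  shows "gcd x s * gcd x t dvd x"
proof -
  have "coprime (gcd x s) (gcd x t)"
    by (rule coprime_divisors[OF gcd_dvd2 gcd_dvd2 assms])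
  thus ?thesis by (simp add: divides_mult)
qed

lemma frac_ge:
  fixes a b :: int assumes "b > 0" "real_of_int a / real_of_int b \<noteq> 1"
  shows "\<bar>real_of_int a / real_of_int b - 1\<bar> \<ge> 1 / real_of_int b"
proof -
  have "a \<noteq> b" using assms by auto
  hence "\<bar>a - b\<bar> \<ge> 1" by linarith
  hence "real_of_int \<bar>a - b\<bar> \<ge> 1" by simp
  hence i: "\<bar>real_of_int a - real_of_int b\<bar> \<ge> 1" by simp
  have B: "real_of_int b > 0" using assms(1) by simp
  have "real_of_int a / real_of_int b - 1 = (real_of_int a - real_of_int b) / real_of_int b"
    using B by (simp add: field_simps)
  hence "\<bar>real_of_int a / real_of_int b - 1\<bar> = \<bar>real_of_int a - real_of_int b\<bar> / real_of_int b"
    using B by simp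
  also have "\<dots> \<ge> 1 / real_of_int b" using i B by (simp add: divide_right_mono)
  finally show ?thesis .
qed

lemma lower:
  assumes "p \<noteq> Qpt" "distQ p < 1/2"
  shows "distQ p ^ 2 * height p \<ge> 1/3"
proof -
  obtain w z where p: "p = (w, z)" by (cases p) auto
  define x where "x = cx w" define y where "y = cy w" define s where "s = cx z" define t where "t = cy z"
  have wr: "real_of_rat w = real_of_int y / real_of_int x" and xp: "x > 0" and cxy: "coprime y x"
    using cq[of w] by (simp_all add: x_def y_def)
  have zr: "real_of_rat z = real_of_int t / real_of_int s" and sp: "s > 0" and cst: "coprime t s"
    using cq[of z] by (simp_all add: s_def t_def)
  define d where "d = distQ p"
  have dw: "\<bar>real_of_int y / real_of_int x - 1\<bar> \<le> d" and dz: "\<bar>real_of_int t / real_of_int s - 1\<bar> \<le> d"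
    using wr zr unfolding d_def distQ_def p by auto
  have d2: "d < 1/2" using assms(2) d_def by simp
  have X: "real_of_int x > 0" and S: "real_of_int s > 0" using xp sp by auto
  have "real_of_int y / real_of_int x \<ge> 1/2" "real_of_int y / real_of_int x \<le> 3/2" using dw d2 by linarith+
  hence y1: "real_of_int y \<ge> real_of_int x / 2" and y2: "real_of_int y \<le> 3 * real_of_int x / 2"
    using X by (simp_all add: field_simps)
  have "real_of_int t / real_of_int s \<ge> 1/2" "real_of_int t / real_of_int s \<le> 3/2" using dz d2 by linarith+
  hence t1: "real_of_int t \<ge> real_of_int s / 2" and t2: "real_of_int t \<le> 3 * real_of_int s / 2"
    using S by (simp_all add: field_simps)
  have yp: "y > 0" using y1 X by linarith
  have tp: "t > 0" using t1 S by linarith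
  define g where "g = gcd x s * gcd x t * gcd y s * gcd y t"
  have gp: "g > 0" unfolding g_def using xp sp yp tp by (simp add: zero_less_mult_iff)
  have "gcd x s * gcd x t dvd x" using cst by (intro gcd_pair_dvd) (simp add: coprime_commute)
  moreover have "gcd y s * gcd y t dvd y" using cst by (intro gcd_pair_dvd) (simp add: coprime_commute)
  ultimately have "(gcd x s * gcd x t) * (gcd y s * gcd y t) dvd x * y" by (rule mult_dvd_mono)
  moreover have "g = (gcd x s * gcd x t) * (gcd y s * gcd y t)" unfolding g_def by (simp only: mult.assoc)
  ultimately have "g dvd x * y" by simp
  hence gxy: "g \<le> x * y" using xp yp by (simp add: zdvd_imp_le)
  have "gcd s x * gcd s y dvd s" using cxy by (intro gcd_pair_dvd) (simp add: coprime_commute)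
  moreover have "gcd t x * gcd t y dvd t" using cxy by (intro gcd_pair_dvd) (simp add: coprime_commute)
  ultimately have "(gcd s x * gcd s y) * (gcd t x * gcd t y) dvd s * t" by (rule mult_dvd_mono)
  moreover have "g = (gcd s x * gcd s y) * (gcd t x * gcd t y)"
    unfolding g_def gcd.commute[of s x] gcd.commute[of s y] gcd.commute[of t x] gcd.commute[of t y]
    by (simp add: ac_simps)
  ultimately have "g dvd s * t" by simp
  hence gst: "g \<le> s * t" using sp tp by (simp add: zdvd_imp_le)
  have hdef: "height p = real_of_int (M4 x y s t) / real_of_int g"
    unfolding height_def M4_def g_def x_def y_def s_def t_def Let_def p by simp
  have M1: "real_of_int (M4 x y s t) \<ge> real_of_int (x^2 * s * t)" unfolding M4_def by linarith
  have M2: "real_of_int (M4 x y s t) \<ge> real_of_int (s^2 * x * y)" unfolding M4_def by linarith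
  have G: "real_of_int g > 0" using gp by simp
  have Gxy: "real_of_int g \<le> real_of_int x * real_of_int y" using gxy by (metis of_int_le_iff of_int_mult)
  have Gst: "real_of_int g \<le> real_of_int s * real_of_int t" using gst by (metis of_int_le_iff of_int_mult)
  define xr where "xr = real_of_int x" define yr where "yr = real_of_int y"
  define sr where "sr = real_of_int s" define tr where "tr = real_of_int t"
  define M where "M = real_of_int (M4 x y s t)" define gr where "gr = real_of_int g"
  have xr0: "xr > 0" and yr0: "yr > 0" and sr0: "sr > 0" and tr0: "tr > 0" and gr0: "gr > 0"
    using xp yp sp tp gp unfolding xr_def yr_def sr_def tr_def gr_def by simp_all
  have gxy': "gr \<le> xr * yr" and gst': "gr \<le> sr * tr" using Gxy Gst unfolding xr_def yr_def sr_def tr_def gr_def by simp_all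
  have M1': "M \<ge> xr^2 * sr * tr" and M2': "M \<ge> sr^2 * xr * yr"
    using M1 M2 unfolding M_def xr_def yr_def sr_def tr_def by simp_all
  have y1': "yr \<ge> xr / 2" and y2': "yr \<le> 3 * xr / 2" and t1': "tr \<ge> sr / 2" and t2': "tr \<le> 3 * sr / 2"
    using y1 y2 t1 t2 unfolding xr_def yr_def sr_def tr_def by simp_all
  have H1: "M / gr \<ge> sr^2 / 3"
  proof -
    have a: "0 < xr^2 * sr * tr" using xr0 sr0 tr0 by simp
    have "M / gr \<ge> xr^2 * sr * tr / (xr * yr)"
      by (rule frac_le) (use M1' a gr0 gxy' in linarith)+
    moreover have "xr^2 * sr * tr / (xr * yr) = xr * sr * tr / yr" using xr0 yr0
      by (simp add: power2_eq_square)
    moreover have "xr * sr * tr / yr \<ge> sr^2 / 3"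
    proof -
      have "sr^2 * yr \<le> sr^2 * (3 * xr / 2)" using y2' sr0 by (intro mult_left_mono) simp_all
      also have "\<dots> = xr * sr * (3 * sr / 2)" by (simp add: power2_eq_square)
      also have "\<dots> \<le> xr * sr * (3 * tr)" using t1' xr0 sr0 by (intro mult_left_mono) simp_all
      finally have "sr^2 * yr \<le> xr * sr * tr * 3" by simp
      thus ?thesis using yr0 by (simp add: field_simps)
    qed
    ultimately show ?thesis by linarith
  qed
  have H2: "M / gr \<ge> xr^2 / 3"
  proof -
    have a: "0 < sr^2 * xr * yr" using xr0 sr0 yr0 by simp
    have "M / gr \<ge> sr^2 * xr * yr / (sr * tr)"
      by (rule frac_le) (use M2' a gr0 gst' in linarith)+
    moreover have "sr^2 * xr * yr / (sr * tr) = sr * xr * yr / tr" using sr0 tr0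
      by (simp add: power2_eq_square)
    moreover have "sr * xr * yr / tr \<ge> xr^2 / 3"
    proof -
      have "xr^2 * tr \<le> xr^2 * (3 * sr / 2)" using t2' xr0 by (intro mult_left_mono) simp_all
      also have "\<dots> = sr * xr * (3 * xr / 2)" by (simp add: power2_eq_square)
      also have "\<dots> \<le> sr * xr * (3 * yr)" using y1' xr0 sr0 by (intro mult_left_mono) simp_all
      finally have "xr^2 * tr \<le> sr * xr * yr * 3" by simp
      thus ?thesis using tr0 by (simp add: field_simps)
    qed
    ultimately show ?thesis by linarith
  qed
  have Hd: "height p = M / gr" using hdef M_def gr_def by simp
  have "w \<noteq> 1 \<or> z \<noteq> 1" using assms(1) p Qpt_def by auto
  thus ?thesis
  proof
    assume "w \<noteq> 1"
    hence "real_of_rat w \<noteq> 1" by simp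
    hence "\<bar>real_of_int y / real_of_int x - 1\<bar> \<ge> 1 / real_of_int x" using wr xp frac_ge by simp
    hence dd: "d \<ge> 1 / xr" using dw unfolding xr_def by linarith
    have "1 / xr \<ge> 0" using X xr_def by simp
    hence "d^2 \<ge> (1/xr)^2" using dd by (intro power_mono) simp_all
    hence "d^2 * (M/gr) \<ge> (1/xr)^2 * (xr^2/3)" using H2 xr0
      by (intro mult_mono) simp_all
    moreover have "(1/xr)^2 * (xr^2/3) = 1/3" using X xr_def by (simp add: field_simps)
    ultimately show ?thesis using Hd d_def by simp
  next
    assume "z \<noteq> 1"
    hence "real_of_rat z \<noteq> 1" by simp
    hence "\<bar>real_of_int t / real_of_int s - 1\<bar> \<ge> 1 / real_of_int s" using zr sp frac_ge by simp
    hence dd: "d \<ge> 1 / sr" using dz unfolding sr_def by linarith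
    have "1 / sr \<ge> 0" using S sr_def by simp
    hence "d^2 \<ge> (1/sr)^2" using dd by (intro power_mono) simp_all
    hence "d^2 * (M/gr) \<ge> (1/sr)^2 * (sr^2/3)" using H1 sr0
      by (intro mult_mono) simp_all
    moreover have "(1/sr)^2 * (sr^2/3) = 1/3" using S sr_def by (simp add: field_simps)
    ultimately show ?thesis using Hd d_def by simp
  qed
qed




definition PP :: "int \<Rightarrow> int \<Rightarrow> int \<Rightarrow> int \<Rightarrow> rat \<times> rat" where
  "PP A B C D = (of_int (C * D) / of_int (A * B), of_int (B * D) / of_int (2 * A * C))"

locale fam =
  fixes A B C D e1 e2 :: int
  assumes C1: "C \<ge> 1" and AC: "A \<ge> C" and CB: "C \<le> B" and B2: "B \<le> 2 * C"
    and AD: "A \<le> D" and D2: "D \<le> 2 * A"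
    and e1: "D^2 = 2 * A^2 + e1" and e2: "B^2 = 2 * C^2 + e2" and e1a: "\<bar>e1\<bar> = 1" and e2a: "\<bar>e2\<bar> = 1"
begin

lemma pos: "A > 0" "B > 0" "C > 0" "D > 0" using C1 AC CB AD by auto

lemma height_fam: "height (PP A B C D) \<le> 16 * real_of_int A ^ 2 * real_of_int C ^ 2"
proof -
  let ?X = "A * B" and ?Y = "C * D" and ?S = "2 * A * C" and ?T = "B * D" and ?G = "A * B * C * D"
  have G0: "?G > 0" using pos by simp
  have h: "height (PP A B C D) \<le> real_of_int (M4 ?X ?Y ?S ?T) / real_of_int ?G"
    unfolding PP_def
  proof (rule height_le)
    show "?X > 0" "?S > 0" "?G > 0" "?Y \<noteq> 0" using pos by simp_all
    show "?G dvd ?X^2 * ?S * ?T" by (rule dvdI[of _ _ "2 * A^2 * B^2"]) (simp add: power2_eq_square ac_simps)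
    show "?G dvd ?Y^2 * ?S * ?T" by (rule dvdI[of _ _ "2 * C^2 * D^2"]) (simp add: power2_eq_square ac_simps)
    show "?G dvd ?T^2 * ?X * ?Y" by (rule dvdI[of _ _ "B^2 * D^2"]) (simp add: power2_eq_square ac_simps)
    show "?G dvd ?S^2 * ?X * ?Y" by (rule dvdI[of _ _ "4 * A^2 * C^2"]) (simp add: power2_eq_square ac_simps)
  qed
  have q1: "?X^2 * ?S * ?T = ?G * (2 * A^2 * B^2)" by (simp add: power2_eq_square ac_simps)
  have q2: "?Y^2 * ?S * ?T = ?G * (2 * C^2 * D^2)" by (simp add: power2_eq_square ac_simps)
  have q3: "?T^2 * ?X * ?Y = ?G * (B^2 * D^2)" by (simp add: power2_eq_square ac_simps)
  have q4: "?S^2 * ?X * ?Y = ?G * (4 * A^2 * C^2)" by (simp add: power2_eq_square ac_simps)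
  have bB: "B^2 \<le> 4 * C^2"
  proof -
    have "B^2 \<le> (2 * C)^2" using B2 pos by (intro power_mono) auto
    thus ?thesis by (simp add: power_mult_distrib)
  qed
  have dD: "D^2 \<le> 4 * A^2"
  proof -
    have "D^2 \<le> (2 * A)^2" using D2 pos by (intro power_mono) auto
    thus ?thesis by (simp add: power_mult_distrib)
  qed
  have a0: "A^2 \<ge> 0" "C^2 \<ge> 0" "B^2 \<ge> 0" "D^2 \<ge> 0" by simp_all
  have "A^2 * B^2 \<le> A^2 * (4 * C^2)" using bB a0 by (intro mult_left_mono)
  moreover have "A^2 * (4 * C^2) = 4 * (A^2 * C^2)" by simp
  moreover have "A^2 * C^2 \<ge> 0" by simp
  ultimately have u1: "2 * A^2 * B^2 \<le> 16 * A^2 * C^2" by linarith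
  have "C^2 * D^2 \<le> C^2 * (4 * A^2)" using dD a0 by (intro mult_left_mono)
  moreover have "C^2 * (4 * A^2) = 4 * (A^2 * C^2)" by simp
  moreover have "A^2 * C^2 \<ge> 0" by simp
  ultimately have u2: "2 * C^2 * D^2 \<le> 16 * A^2 * C^2" by linarith
  have "B^2 * D^2 \<le> (4 * C^2) * (4 * A^2)" using bB dD a0 by (intro mult_mono) simp_all
  moreover have "(4 * C^2) * (4 * A^2) = 16 * A^2 * C^2" by simp
  ultimately have u3: "B^2 * D^2 \<le> 16 * A^2 * C^2" by linarith
  have u4: "4 * A^2 * C^2 \<le> 16 * A^2 * C^2" using a0 by simp
  have GG: "\<And>u. 0 \<le> u \<Longrightarrow> u \<le> 16 * A^2 * C^2 \<Longrightarrow> \<bar>?G * u\<bar> \<le> ?G * (16 * A^2 * C^2)"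
    using G0 by (metis abs_of_nonneg less_imp_le mult_left_mono mult_nonneg_nonneg)
  have b1: "\<bar>?X^2 * ?S * ?T\<bar> \<le> ?G * (16 * A^2 * C^2)" unfolding q1 by (rule GG[OF _ u1]) simp
  have b2: "\<bar>?Y^2 * ?S * ?T\<bar> \<le> ?G * (16 * A^2 * C^2)" unfolding q2 by (rule GG[OF _ u2]) simp
  have b3: "\<bar>?T^2 * ?X * ?Y\<bar> \<le> ?G * (16 * A^2 * C^2)" unfolding q3 by (rule GG[OF _ u3]) simp
  have b4: "\<bar>?S^2 * ?X * ?Y\<bar> \<le> ?G * (16 * A^2 * C^2)" unfolding q4 by (rule GG[OF _ u4]) simp
  have "M4 ?X ?Y ?S ?T \<le> ?G * (16 * A^2 * C^2)"
    unfolding M4_def by (intro max.boundedI b1 b2 b3 b4)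
  hence "real_of_int (M4 ?X ?Y ?S ?T) \<le> real_of_int (?G * (16 * A^2 * C^2))" by (simp only: of_int_le_iff)
  hence "real_of_int (M4 ?X ?Y ?S ?T) \<le> real_of_int ?G * (16 * real_of_int A ^ 2 * real_of_int C ^ 2)"
    by simp
  moreover have "real_of_int ?G > 0" using G0 by (simp only: of_int_0_less_iff)
  ultimately have "real_of_int (M4 ?X ?Y ?S ?T) / real_of_int ?G \<le> 16 * real_of_int A ^ 2 * real_of_int C ^ 2"
    by (simp add: divide_le_eq mult.commute)
  with h show ?thesis by linarith
qed

end



lemma aux_div:
  fixes k p q R :: real
  assumes "0 \<le> k" "0 < p" "p \<le> q" "k * q \<le> R"
  shows "k / q \<le> R / p^2"
proof -
  have q: "q > 0" using assms by linarith
  have R: "R \<ge> 0" using assms q by (meson mult_nonneg_nonneg less_imp_le order_trans)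
  have "k / q = k * q / q^2" using q by (simp add: power2_eq_square)
  also have "\<dots> \<le> R / q^2" using assms(4) q by (simp add: divide_right_mono)
  also have "\<dots> \<le> R / p^2" using R assms q by (intro divide_left_mono power_mono) auto
  finally show ?thesis .
qed

context fam begin

lemma I1: "(C*D - A*B) * (C*D + A*B) = e1 * C^2 - e2 * A^2"
proof -
  have "(C*D - A*B) * (C*D + A*B) = C^2 * D^2 - A^2 * B^2" by (simp add: algebra_simps power2_eq_square)
  also have "\<dots> = C^2 * (2 * A^2 + e1) - A^2 * (2 * C^2 + e2)" using e1 e2 by simp
  finally show ?thesis by (simp add: algebra_simps)
qed

lemma I2: "(B*D - 2*A*C) * (B*D + 2*A*C) = 2*e1 * C^2 + 2*e2 * A^2 + e1*e2"
proof -
  have "(B*D - 2*A*C) * (B*D + 2*A*C) = B^2 * D^2 - 4 * A^2 * C^2" by (simp add: algebra_simps power2_eq_square)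
  also have "\<dots> = (2 * C^2 + e2) * (2 * A^2 + e1) - 4 * A^2 * C^2" using e1 e2 by simp
  finally show ?thesis by (simp add: algebra_simps)
qed

lemma J1: "\<bar>C*D - A*B\<bar> * (A*B) \<le> A^2 + C^2"
proof -
  have "\<bar>e1 * C^2 - e2 * A^2\<bar> \<le> \<bar>e1 * C^2\<bar> + \<bar>e2 * A^2\<bar>" by (rule abs_triangle_ineq4)
  also have "\<dots> = C^2 + A^2" using e1a e2a by (simp add: abs_mult)
  finally have a: "\<bar>(C*D - A*B) * (C*D + A*B)\<bar> \<le> A^2 + C^2" using I1 by simp
  have "\<bar>C*D - A*B\<bar> * (A*B) \<le> \<bar>C*D - A*B\<bar> * (C*D + A*B)" using pos by (intro mult_left_mono) auto
  also have "\<dots> = \<bar>(C*D - A*B) * (C*D + A*B)\<bar>" using pos by (simp add: abs_mult)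
  finally show ?thesis using a by linarith
qed

lemma J2: "\<bar>B*D - 2*A*C\<bar> * (2*A*C) \<le> 3 * (A^2 + C^2)"
proof -
  have "\<bar>2*e1 * C^2 + 2*e2 * A^2 + e1*e2\<bar> \<le> \<bar>2*e1 * C^2\<bar> + \<bar>2*e2 * A^2\<bar> + \<bar>e1*e2\<bar>" by linarith
  also have "\<dots> = 2*C^2 + 2*A^2 + 1" using e1a e2a by (simp add: abs_mult)
  finally have a: "\<bar>(B*D - 2*A*C) * (B*D + 2*A*C)\<bar> \<le> 2*C^2 + 2*A^2 + 1" using I2 by simp
  have "\<bar>B*D - 2*A*C\<bar> * (2*A*C) \<le> \<bar>B*D - 2*A*C\<bar> * (B*D + 2*A*C)" using pos by (intro mult_left_mono) auto
  also have "\<dots> = \<bar>(B*D - 2*A*C) * (B*D + 2*A*C)\<bar>" using pos by (simp add: abs_mult)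
  finally have b: "\<bar>B*D - 2*A*C\<bar> * (2*A*C) \<le> 2*C^2 + 2*A^2 + 1" using a by linarith
  have "A^2 \<ge> 1" using pos by (simp add: one_le_power)
  moreover have "C^2 \<ge> 0" by simp
  moreover have "3 * (A^2 + C^2) = 3 * A^2 + 3 * C^2" by simp
  ultimately show ?thesis using b by linarith
qed

lemma zne: "B*D \<noteq> 2*A*C"
proof
  assume "B*D = 2*A*C"
  hence "2*e1 * C^2 + 2*e2 * A^2 + e1*e2 = 0" using I2 by simp
  hence "e1*e2 = 2 * (- e1*C^2 - e2*A^2)" by (simp add: algebra_simps)
  hence ev: "even (e1*e2)" by simp
  have "\<bar>e1*e2\<bar> = 1" using e1a e2a by (simp add: abs_mult)
  have "e1 = 1 \<or> e1 = -1" using e1a by linarith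
  moreover have "e2 = 1 \<or> e2 = -1" using e2a by linarith
  ultimately show False using ev by auto
qed

lemma dist_fam: "distQ (PP A B C D) \<le> 1 / real_of_int A ^ 2 + 1 / real_of_int C ^ 2"
proof -
  define a where "a = real_of_int A" define b where "b = real_of_int B"
  define c where "c = real_of_int C" define d where "d = real_of_int D"
  have a0: "a > 0" "b > 0" "c > 0" "d > 0" using pos unfolding a_def b_def c_def d_def by simp_all
  have ab: "a * c \<le> a * b" using CB a0 unfolding a_def b_def c_def by (simp add: mult_left_mono)
  have R: "(a^2 + c^2) / (a*c)^2 = 1 / a^2 + 1 / c^2" using a0 by (simp add: field_simps power2_eq_square)
  have "real_of_rat (fst (PP A B C D)) = (c*d) / (a*b)"
    unfolding PP_def a_def b_def c_def d_def by (simp add: of_rat_divide of_rat_mult)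
  hence w: "real_of_rat (fst (PP A B C D)) - 1 = (c*d - a*b) / (a*b)" using a0 by (simp add: diff_divide_distrib)
  have "real_of_rat (snd (PP A B C D)) = (b*d) / (2*a*c)"
    unfolding PP_def a_def b_def c_def d_def by (simp add: of_rat_divide of_rat_mult)
  hence z: "real_of_rat (snd (PP A B C D)) - 1 = (b*d - 2*a*c) / (2*a*c)" using a0 by (simp add: diff_divide_distrib)
  have j1: "\<bar>c*d - a*b\<bar> * (a*b) \<le> a^2 + c^2"
  proof -
    have "real_of_int (\<bar>C*D - A*B\<bar> * (A*B)) \<le> real_of_int (A^2 + C^2)" using J1 by (simp only: of_int_le_iff)
    thus ?thesis unfolding a_def b_def c_def d_def by simp
  qed
  have j2: "\<bar>b*d - 2*a*c\<bar> * (2*a*c) \<le> 3 * (a^2 + c^2)"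
  proof -
    have "real_of_int (\<bar>B*D - 2*A*C\<bar> * (2*A*C)) \<le> real_of_int (3 * (A^2 + C^2))" using J2 by (simp only: of_int_le_iff)
    thus ?thesis unfolding a_def b_def c_def d_def by simp
  qed
  have "\<bar>(c*d - a*b) / (a*b)\<bar> = \<bar>c*d - a*b\<bar> / (a*b)" using a0 by simp
  also have "\<dots> \<le> (a^2 + c^2) / (a*c)^2" using a0 ab j1 by (intro aux_div) simp_all
  finally have dw: "\<bar>real_of_rat (fst (PP A B C D)) - 1\<bar> \<le> 1 / a^2 + 1 / c^2" using w R by simp
  have "\<bar>(b*d - 2*a*c) / (2*a*c)\<bar> = \<bar>b*d - 2*a*c\<bar> / (2*a*c)" using a0 by simp
  also have "\<dots> \<le> 3 * (a^2 + c^2) / (2*a*c)^2" using a0 j2 by (intro aux_div) simp_all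
  also have "\<dots> = (3/4) * ((a^2 + c^2) / (a*c)^2)" by (simp add: power2_eq_square field_simps)
  also have "\<dots> \<le> (a^2 + c^2) / (a*c)^2"
  proof -
    have "(a^2 + c^2) / (a*c)^2 \<ge> 0" by simp
    thus ?thesis by linarith
  qed
  finally have dz: "\<bar>real_of_rat (snd (PP A B C D)) - 1\<bar> \<le> 1 / a^2 + 1 / c^2" using z R by simp
  show ?thesis unfolding distQ_def using dw dz a_def c_def by simp
qed

lemma PP_ne: "PP A B C D \<noteq> Qpt"
proof
  assume h: "PP A B C D = Qpt"
  have "snd (PP A B C D) = snd Qpt" using h by (rule arg_cong)
  hence "(of_int (B * D) / of_int (2 * A * C) :: rat) = 1" unfolding PP_def Qpt_def by (simp only: snd_conv)
  hence "rat_of_int (B * D) = of_int (2 * A * C)" using divide_eq_1_iff by blast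
  hence "B * D = 2 * A * C" by (simp only: of_int_eq_iff)
  thus False using zne by simp
qed

lemma PP_chart: "PP A B C D \<in> chart_pts"
  unfolding chart_pts_def PP_def using pos by simp

end



fun pl :: "nat \<Rightarrow> int \<times> int" where
  "pl 0 = (1, 1)"
| "pl (Suc k) = (fst (pl k) + snd (pl k), 2 * fst (pl k) + snd (pl k))"

definition pa :: "nat \<Rightarrow> int" where "pa k = fst (pl k)"
definition pd :: "nat \<Rightarrow> int" where "pd k = snd (pl k)"
definition pe :: "nat \<Rightarrow> int" where "pe k = (-1) ^ Suc k"

lemma pa_Suc: "pa (Suc k) = pa k + pd k" and pd_Suc: "pd (Suc k) = 2 * pa k + pd k"
  by (simp_all add: pa_def pd_def)

lemma pe_abs: "\<bar>pe k\<bar> = 1" by (simp add: pe_def)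

lemma pell: "pd k ^ 2 = 2 * pa k ^ 2 + pe k"
proof (induction k)
  case 0 show ?case by (simp add: pa_def pd_def pe_def)
next
  case (Suc k)
  have "pd (Suc k) ^ 2 - 2 * pa (Suc k) ^ 2 = - (pd k ^ 2 - 2 * pa k ^ 2)"
    unfolding pa_Suc pd_Suc by (simp add: power2_eq_square algebra_simps)
  also have "\<dots> = - pe k" using Suc by simp
  also have "\<dots> = pe (Suc k)" by (simp add: pe_def)
  finally show ?case by simp
qed

lemma pbounds: "pa k \<ge> 1 \<and> pa k \<le> pd k \<and> pd k \<le> 2 * pa k"
proof (induction k)
  case 0 show ?case by (simp add: pa_def pd_def)
next
  case (Suc k) thus ?case unfolding pa_Suc pd_Suc by simp
qed

lemma pa_ge1: "pa k \<ge> 1" and pa_le_pd: "pa k \<le> pd k" and pd_le: "pd k \<le> 2 * pa k"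
  using pbounds[of k] by auto

lemma pa_Suc_gt: "pa (Suc k) > pa k" using pa_Suc[of k] pa_ge1[of k] pa_le_pd[of k] by simp

lemma pa_Suc_le: "pa (Suc k) \<le> 3 * pa k" using pa_Suc[of k] pd_le[of k] by simp

lemma pa_smono: "strict_mono pa" by (rule strict_monoI_Suc) (rule pa_Suc_gt)

lemma pa_mono: "k \<le> n \<Longrightarrow> pa k \<le> pa n" using pa_smono by (simp add: strict_mono_less_eq)

lemma pa_ge: "pa k \<ge> int k + 1"
proof (induction k)
  case 0 show ?case using pa_ge1[of 0] by simp
next
  case (Suc k) thus ?case using pa_Suc_gt[of k] by simp
qed

lemma pa_grow: "pa (k + j) \<le> 3 ^ j * pa k"
proof (induction j)
  case 0 show ?case by simp
next
  case (Suc j)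
  have "pa (k + Suc j) \<le> 3 * pa (k + j)" using pa_Suc_le[of "k + j"] by simp
  also have "\<dots> \<le> 3 * (3 ^ j * pa k)" using Suc by simp
  finally show ?case by simp
qed

lemma fam_inst: "m \<le> n \<Longrightarrow> fam (pa n) (pd m) (pa m) (pd n) (pe n) (pe m)"
  apply (unfold_locales)
  using pa_ge1[of m] pa_mono[of m n] pa_le_pd[of m] pd_le[of m] pa_le_pd[of n] pd_le[of n]
    pell[of n] pell[of m] pe_abs[of n] pe_abs[of m] by auto

lemma sq_ratio_inj:
  assumes "pa n ^ 2 * pd k ^ 2 = pa k ^ 2 * pd n ^ 2"
  shows "n = k"
proof -
  have "pa n ^ 2 * (2 * pa k ^ 2 + pe k) = pa k ^ 2 * (2 * pa n ^ 2 + pe n)"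
    using assms pell[of n] pell[of k] by simp
  hence e: "pa n ^ 2 * pe k = pa k ^ 2 * pe n" by (simp add: algebra_simps)
  have h1: "pe k = 1 \<or> pe k = -1" and h2: "pe n = 1 \<or> pe n = -1" using pe_abs[of k] pe_abs[of n] by linarith+
  have p1: "pa n ^ 2 > 0" and p2: "pa k ^ 2 > 0" using pa_ge1[of n] pa_ge1[of k] by simp_all
  have "pa n ^ 2 = pa k ^ 2"
    using h1 h2
  proof (elim disjE)
    assume "pe k = 1" "pe n = 1" thus ?thesis using e by simp
  next
    assume "pe k = -1" "pe n = -1" thus ?thesis using e by simp
  next
    assume "pe k = 1" "pe n = -1" thus ?thesis using e p1 p2 by simp
  next
    assume "pe k = -1" "pe n = 1" thus ?thesis using e p1 p2 by simp
  qed
  hence "pa n = pa k" using pa_ge1[of n] pa_ge1[of k] by (simp add: power2_eq_iff)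
  thus ?thesis using pa_smono by (simp add: strict_mono_eq)
qed

definition rho :: "nat \<Rightarrow> rat" where "rho n = of_int (pd n) / of_int (pa n)"
definition lam :: "nat \<Rightarrow> rat" where "lam m = 2 * of_int (pa m) ^ 2 / of_int (pd m) ^ 2"

lemma rho_inj: "inj rho"
proof (rule injI)
  fix n k assume "rho n = rho k"
  hence "rat_of_int (pd n) * of_int (pa k) = of_int (pd k) * of_int (pa n)"
    using pa_ge1[of n] pa_ge1[of k] unfolding rho_def by (simp add: field_simps)
  hence "pd n * pa k = pd k * pa n" by (metis of_int_eq_iff of_int_mult)
  hence "(pd n * pa k)^2 = (pd k * pa n)^2" by simp
  hence "pa n ^ 2 * pd k ^ 2 = pa k ^ 2 * pd n ^ 2" by (simp add: power_mult_distrib ac_simps)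
  thus "n = k" by (rule sq_ratio_inj)
qed

lemma lam_inj: "inj lam"
proof (rule injI)
  fix n k assume "lam n = lam k"
  moreover have "pd n \<ge> 1" "pd k \<ge> 1" using pa_ge1[of n] pa_le_pd[of n] pa_ge1[of k] pa_le_pd[of k] by simp_all
  ultimately have "rat_of_int (pa n) ^ 2 * of_int (pd k) ^ 2 = of_int (pa k) ^ 2 * of_int (pd n) ^ 2"
    unfolding lam_def by (simp add: field_simps)
  hence "pa n ^ 2 * pd k ^ 2 = pa k ^ 2 * pd n ^ 2" by (metis of_int_eq_iff of_int_mult of_int_power)
  thus "n = k" by (rule sq_ratio_inj)
qed




lemma eval2_pCons: "eval2 (pCons g F) (w, z) = poly g w + z * eval2 F (w, z)"
  unfolding eval2_def by simp

lemma eval2_0: "eval2 0 p = 0" unfolding eval2_def by simp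

lemma line_poly:
  fixes f :: "rat poly poly" and c k :: rat
  shows "(\<forall>i. degree (coeff f i) \<le> K) \<Longrightarrow>
    \<exists>p. degree p \<le> K + degree f \<and> (\<forall>r. poly p r = eval2 f (c * r, k * r))"
proof (induction f rule: pCons_induct)
  case 0 show ?case by (intro exI[of _ 0]) (simp add: eval2_0)
next
  case (pCons g F)
  have hg: "degree g \<le> K" using pCons.prems[rule_format, of 0] by simp
  have hF: "\<forall>i. degree (coeff F i) \<le> K" using pCons.prems by (metis coeff_pCons_Suc)
  obtain pF where pF: "degree pF \<le> K + degree F" "\<forall>r. poly pF r = eval2 F (c * r, k * r)"
    using pCons.IH hF by blast
  define q where "q = pcompose g [:0, c:]"
  have pq: "poly q r = poly g (c * r)" for r unfolding q_def by (simp add: poly_pcompose mult.commute)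
  have "degree q \<le> degree g * degree [:0, c:]" unfolding q_def by (rule degree_pcompose_le)
  moreover have "degree [:0, c:] \<le> 1" by (cases "c = 0") auto
  ultimately have "degree q \<le> degree g * 1" by (meson mult_le_mono2 order_trans)
  hence dq: "degree q \<le> K" using hg by simp
  show ?case
  proof (cases "F = 0")
    case True
    show ?thesis using dq pq True by (intro exI[of _ q]) (simp add: eval2_pCons eval2_0)
  next
    case False
    define p where "p = q + [:0, k:] * pF"
    have "degree ([:0, k:] * pF) \<le> degree [:0, k:] + degree pF" by (rule degree_mult_le)
    moreover have "degree [:0, k:] \<le> 1" by (cases "k = 0") auto
    ultimately have d1: "degree ([:0, k:] * pF) \<le> K + degree (pCons g F)"
      using pF(1) False by simp
    have "degree q \<le> K + degree (pCons g F)" using dq by simp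
    hence "degree p \<le> K + degree (pCons g F)" using d1 unfolding p_def by (rule degree_add_le)
    moreover have "\<forall>r. poly p r = eval2 (pCons g F) (c * r, k * r)"
      unfolding p_def using pq pF(2) by (simp add: eval2_pCons algebra_simps)
    ultimately show ?thesis by blast
  qed
qed

lemma coeff_poly_const:
  fixes f :: "rat poly poly"
  shows "coeff (poly f [:z:]) j = poly (map_poly (\<lambda>q. coeff q j) f) z"
proof (induction f rule: pCons_induct)
  case 0 show ?case by simp
next
  case (pCons g F)
  show ?case using pCons by (simp add: map_poly_pCons)
qed

lemma grid:
  fixes f :: "rat poly poly"
  assumes "infinite Z" "\<forall>z\<in>Z. poly f [:z:] = 0"
  shows "f = 0"
proof -
  have "map_poly (\<lambda>q. coeff q j) f = 0" for j
  proof (rule ccontr)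
    assume ne: "map_poly (\<lambda>q. coeff q j) f \<noteq> 0"
    have "Z \<subseteq> {z. poly (map_poly (\<lambda>q. coeff q j) f) z = 0}"
      using assms(2) by (auto simp flip: coeff_poly_const)
    moreover have "finite {z. poly (map_poly (\<lambda>q. coeff q j) f) z = 0}" using ne by (rule poly_roots_finite)
    ultimately show False using assms(1) finite_subset by blast
  qed
  have "coeff (coeff f i) j = 0" for i j
  proof -
    have "coeff (map_poly (\<lambda>q. coeff q j) f) i = coeff (coeff f i) j" by (simp add: coeff_map_poly)
    thus ?thesis using \<open>\<And>j. map_poly (\<lambda>q. coeff q j) f = 0\<close>[of j] by simp
  qed
  hence "coeff f i = 0" for i by (intro poly_eqI) simp
  thus ?thesis by (intro poly_eqI) simp
qed




definition Pt :: "nat \<Rightarrow> nat \<Rightarrow> rat \<times> rat" where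
  "Pt n m = PP (pa n) (pd m) (pa m) (pd n)"

definition cc :: "nat \<Rightarrow> rat" where "cc m = of_int (pa m) / of_int (pd m)"
definition kk :: "nat \<Rightarrow> rat" where "kk m = of_int (pd m) / (2 * of_int (pa m))"

lemma pa_ne: "rat_of_int (pa m) \<noteq> 0" using pa_ge1[of m] by simp
lemma pd_ne: "rat_of_int (pd m) \<noteq> 0" using pa_ge1[of m] pa_le_pd[of m] by simp

lemma Pt_eq: "Pt n m = (cc m * rho n, kk m * rho n)"
  unfolding Pt_def PP_def cc_def kk_def rho_def using pa_ne[of n] pa_ne[of m] pd_ne[of n] pd_ne[of m]
  by (simp add: field_simps)

lemma kk_ne: "kk m \<noteq> 0" unfolding kk_def using pa_ne[of m] pd_ne[of m] by simp

lemma cc_kk: "cc m * (z / kk m) = lam m * z" "kk m * (z / kk m) = z"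
  unfolding cc_def kk_def lam_def using pa_ne[of m] pd_ne[of m] by (simp_all add: field_simps power2_eq_square)

lemma dens:
  fixes f :: "rat poly poly"
  assumes f: "f \<noteq> 0"
  shows "\<exists>N. \<forall>m0. \<exists>m\<ge>m0. \<exists>n. m \<le> n \<and> n \<le> m + N \<and> eval2 f (Pt n m) \<noteq> 0"
proof -
  define K where "K = (\<Sum>i\<le>degree f. degree (coeff f i))"
  have Kb: "\<forall>i. degree (coeff f i) \<le> K"
  proof
    fix i show "degree (coeff f i) \<le> K"
    proof (cases "i \<le> degree f")
      case True thus ?thesis unfolding K_def by (intro member_le_sum) auto
    next
      case False thus ?thesis by (simp add: coeff_eq_0)
    qed
  qed
  define N where "N = K + degree f"
  show ?thesis
  proof (rule ccontr)
    assume "\<not> ?thesis"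
    then obtain m0 where H: "\<And>m n. m \<ge> m0 \<Longrightarrow> m \<le> n \<Longrightarrow> n \<le> m + N \<Longrightarrow> eval2 f (Pt n m) = 0"
      by (metis not_le)
    have A: "eval2 f (cc m * r, kk m * r) = 0" if m: "m \<ge> m0" for m r
    proof -
      obtain p where p: "degree p \<le> N" "\<forall>r. poly p r = eval2 f (cc m * r, kk m * r)"
        using line_poly[OF Kb, of "cc m" "kk m"] unfolding N_def by blast
      have "p = 0"
      proof (rule ccontr)
        assume pn: "p \<noteq> 0"
        have "rho ` {m..m+N} \<subseteq> {x. poly p x = 0}"
          using H m p(2) by (auto simp: Pt_eq)
        hence "card (rho ` {m..m+N}) \<le> card {x. poly p x = 0}"
          using poly_roots_finite[OF pn] by (rule card_mono[rotated])
        also have "\<dots> \<le> degree p" using pn by (rule card_poly_roots_bound)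
        also have "card (rho ` {m..m+N}) = N + 1"
          using rho_inj by (simp add: card_image inj_on_subset)
        finally show False using p(1) by simp
      qed
      thus ?thesis using p(2) by simp
    qed
    have B: "poly f [:z:] = 0" if z: "z \<noteq> 0" for z
    proof (rule ccontr)
      assume pn: "poly f [:z:] \<noteq> 0"
      have "(\<lambda>m. lam m * z) ` {m0..} \<subseteq> {x. poly (poly f [:z:]) x = 0}"
      proof
        fix x assume "x \<in> (\<lambda>m. lam m * z) ` {m0..}"
        then obtain m where m: "m \<ge> m0" "x = lam m * z" by auto
        have "eval2 f (cc m * (z / kk m), kk m * (z / kk m)) = 0" using A[OF m(1)] .
        thus "x \<in> {x. poly (poly f [:z:]) x = 0}" unfolding cc_kk m(2) eval2_def by simp
      qed
      moreover have "inj_on (\<lambda>m. lam m * z) {m0..}"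
        using lam_inj z by (auto simp: inj_on_def inj_def)
      hence "infinite ((\<lambda>m. lam m * z) ` {m0..})"
        using finite_imageD infinite_Ici by blast
      ultimately show False using poly_roots_finite[OF pn] finite_subset by blast
    qed
    have "infinite {z :: rat. z \<noteq> 0}"
    proof
      assume "finite {z :: rat. z \<noteq> 0}"
      hence "finite (insert 0 {z :: rat. z \<noteq> 0})" by simp
      moreover have "insert 0 {z :: rat. z \<noteq> 0} = UNIV" by auto
      ultimately show False using infinite_UNIV_char_0[where 'a = rat] by metis
    qed
    hence "f = 0" by (rule grid) (use B in auto)
    thus False using f by simp
  qed
qed




definition Gam :: "(rat \<times> rat) set \<Rightarrow> real set" where
  "Gam V = {\<gamma>::real. \<gamma> > 0 \<and>
      (\<exists>P :: nat \<Rightarrow> rat \<times> rat. (\<forall>i. P i \<in> V \<and> P i \<in> chart_pts \<and> P i \<noteq> Qpt) \<and>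
         ((\<lambda>i. distQ (P i)) \<longlonglongrightarrow> 0) \<and>
         (\<exists>B. \<forall>i. distQ (P i) powr \<gamma> * height (P i) \<le> B))}"

lemma alpha_Gam: "alpha V = Inf (ereal ` Gam V)" unfolding alpha_def Gam_def by simp

lemma height_nonneg: "height p \<ge> 0"
  unfolding height_def Let_def by (intro divide_nonneg_nonneg) simp_all

lemma distQ_nonneg: "distQ p \<ge> 0" unfolding distQ_def by simp

lemma fam_bounds:
  assumes mn: "m \<le> n" "n \<le> m + N"
  shows "distQ (Pt n m) \<le> 2 / real_of_int (pa m) ^ 2"
    and "distQ (Pt n m) powr 2 * height (Pt n m) \<le> 64 * 9 ^ N"
    and "Pt n m \<in> chart_pts" "Pt n m \<noteq> Qpt"
proof -
  interpret fam "pa n" "pd m" "pa m" "pd n" "pe n" "pe m" using fam_inst[OF mn(1)] .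
  define a where "a = real_of_int (pa n)" define c where "c = real_of_int (pa m)"
  have c1: "c \<ge> 1" using pa_ge1[of m] c_def by simp
  have ac: "a \<ge> c" using pa_mono[OF mn(1)] a_def c_def by simp
  have "pa n \<le> 3 ^ (n - m) * pa m" using pa_grow[of m "n - m"] mn by simp
  also have "\<dots> \<le> 3 ^ N * pa m" using mn pa_ge1[of m] by (intro mult_right_mono power_increasing) auto
  finally have a3: "a \<le> 3 ^ N * c" unfolding a_def c_def by (metis of_int_le_iff of_int_mult of_int_power of_int_numeral)
  have d1: "distQ (Pt n m) \<le> 1 / a^2 + 1 / c^2" unfolding Pt_def a_def c_def by (rule dist_fam)
  have "1 / a^2 \<le> 1 / c^2" using c1 ac by (intro divide_left_mono power_mono) auto
  hence d2: "distQ (Pt n m) \<le> 2 / c^2" using d1 by simp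
  thus "distQ (Pt n m) \<le> 2 / real_of_int (pa m) ^ 2" unfolding c_def .
  have h: "height (Pt n m) \<le> 16 * a^2 * c^2" unfolding Pt_def a_def c_def by (rule height_fam)
  define d where "d = distQ (Pt n m)"
  have d0: "d \<ge> 0" unfolding d_def by (rule distQ_nonneg)
  have dp: "d powr 2 = d^2" using d0 by (simp add: powr_numeral)
  have "d^2 \<le> (2 / c^2)^2" using d0 d2 d_def by (intro power_mono) auto
  hence "d^2 * height (Pt n m) \<le> (2 / c^2)^2 * (16 * a^2 * c^2)"
    using h height_nonneg by (intro mult_mono) auto
  also have "\<dots> = 64 * (a / c)^2" using c1 by (simp add: field_simps power2_eq_square)
  also have "\<dots> \<le> 64 * (3 ^ N)^2"
  proof -
    have "a / c \<le> 3 ^ N" using a3 c1 by (simp add: divide_le_eq)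
    moreover have "a / c \<ge> 0" using ac c1 by simp
    ultimately show ?thesis by (intro mult_left_mono power_mono) auto
  qed
  also have "\<dots> = 64 * 9 ^ N"
  proof -
    have "((3::real) ^ N) ^ 2 = (3 ^ 2) ^ N" by (simp only: power_mult[symmetric] mult.commute)
    thus ?thesis by simp
  qed
  finally show "distQ (Pt n m) powr 2 * height (Pt n m) \<le> 64 * 9 ^ N" using dp d_def by simp
  show "Pt n m \<in> chart_pts" unfolding Pt_def by (rule PP_chart)
  show "Pt n m \<noteq> Qpt" unfolding Pt_def by (rule PP_ne)
qed

lemma two_in_Gam:
  fixes f :: "rat poly poly"
  assumes f: "f \<noteq> 0"
  shows "2 \<in> Gam {p \<in> chart_pts. eval2 f p \<noteq> 0}"
proof -
  obtain N where N: "\<forall>m0. \<exists>m\<ge>m0. \<exists>n. m \<le> n \<and> n \<le> m + N \<and> eval2 f (Pt n m) \<noteq> 0"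
    using dens[OF f] by blast
  have "\<forall>i. \<exists>mn. fst mn \<ge> i \<and> fst mn \<le> snd mn \<and> snd mn \<le> fst mn + N \<and> eval2 f (Pt (snd mn) (fst mn)) \<noteq> 0"
    using N by (metis fst_conv snd_conv)
  then obtain g where g: "\<And>i. fst (g i) \<ge> i \<and> fst (g i) \<le> snd (g i) \<and> snd (g i) \<le> fst (g i) + N \<and>
      eval2 f (Pt (snd (g i)) (fst (g i))) \<noteq> 0"
    by metis
  define P where "P i = Pt (snd (g i)) (fst (g i))" for i
  have mem: "P i \<in> {p \<in> chart_pts. eval2 f p \<noteq> 0} \<and> P i \<in> chart_pts \<and> P i \<noteq> Qpt" for i
    using g[of i] fam_bounds(3,4)[of "fst (g i)" "snd (g i)" N] unfolding P_def by auto
  have bd: "distQ (P i) powr 2 * height (P i) \<le> 64 * 9 ^ N" for i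
    using g[of i] fam_bounds(2)[of "fst (g i)" "snd (g i)" N] unfolding P_def by auto
  have up: "distQ (P i) \<le> 2 * inverse (real (Suc i))" for i
  proof -
    have "distQ (P i) \<le> 2 / real_of_int (pa (fst (g i))) ^ 2"
      using g[of i] fam_bounds(1)[of "fst (g i)" "snd (g i)" N] unfolding P_def by auto
    also have "\<dots> \<le> 2 / real (Suc i)"
    proof -
      have "pa (fst (g i)) \<ge> int (fst (g i)) + 1" by (rule pa_ge)
      hence "real_of_int (pa (fst (g i))) \<ge> real (Suc i)" using g[of i] by simp
      moreover have "real (Suc i) \<ge> 1" by simp
      ultimately have x1: "real_of_int (pa (fst (g i))) \<ge> 1" and xs: "real_of_int (pa (fst (g i))) \<ge> real (Suc i)" by linarith+
      have "real_of_int (pa (fst (g i))) * 1 \<le> real_of_int (pa (fst (g i))) * real_of_int (pa (fst (g i)))"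
        using x1 by (intro mult_left_mono) auto
      hence "real_of_int (pa (fst (g i))) ^ 2 \<ge> real (Suc i)" using xs unfolding power2_eq_square by linarith
      thus ?thesis by (intro divide_left_mono) (auto intro!: mult_pos_pos)
    qed
    finally show ?thesis by (simp add: divide_inverse)
  qed
  have lim: "(\<lambda>i. distQ (P i)) \<longlonglongrightarrow> 0"
  proof (rule tendsto_sandwich[of "\<lambda>_. 0" _ _ "\<lambda>i. 2 * inverse (real (Suc i))"])
    show "\<forall>\<^sub>F n in sequentially. 0 \<le> distQ (P n)" by (simp add: distQ_nonneg)
    show "\<forall>\<^sub>F n in sequentially. distQ (P n) \<le> 2 * inverse (real (Suc n))" using up by simp
    show "(\<lambda>_. 0::real) \<longlonglongrightarrow> 0" by simp
    show "(\<lambda>i. 2 * inverse (real (Suc i))) \<longlonglongrightarrow> 0"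
      by (rule tendsto_mult_right_zero) (rule LIMSEQ_inverse_real_of_nat)
  qed
  show ?thesis unfolding Gam_def using mem lim bd by (intro CollectI conjI exI[of _ P]) auto
qed




lemma distQ_pos: "p \<noteq> Qpt \<Longrightarrow> distQ p > 0"
proof (rule ccontr)
  assume ne: "p \<noteq> Qpt" and "\<not> distQ p > 0"
  hence "distQ p = 0" using distQ_nonneg[of p] by linarith
  moreover have "\<bar>real_of_rat (fst p) - 1\<bar> \<le> distQ p" "\<bar>real_of_rat (snd p) - 1\<bar> \<le> distQ p"
    unfolding distQ_def by simp_all
  ultimately have "real_of_rat (fst p) = 1" "real_of_rat (snd p) = 1" by linarith+
  hence "fst p = 1" "snd p = 1" by (simp_all add: of_rat_eq_1_iff)
  thus False using ne unfolding Qpt_def by (cases p) simp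
qed

lemma Gam_ge: "\<gamma> \<in> Gam V \<Longrightarrow> \<gamma> \<ge> 2"
proof (rule ccontr)
  assume g: "\<gamma> \<in> Gam V" and "\<not> \<gamma> \<ge> 2"
  hence lt: "\<gamma> < 2" by simp
  obtain P B where P: "\<forall>i. P i \<in> V \<and> P i \<in> chart_pts \<and> P i \<noteq> Qpt"
    and lim: "(\<lambda>i. distQ (P i)) \<longlonglongrightarrow> 0" and B: "\<forall>i. distQ (P i) powr \<gamma> * height (P i) \<le> B"
    using g unfolding Gam_def by blast
  define e where "e = 2 - \<gamma>"
  have e0: "e > 0" using lt e_def by simp
  have lim2: "(\<lambda>i. distQ (P i) powr e) \<longlonglongrightarrow> 0"
    by (rule tendsto_zero_powrI[OF lim tendsto_const]) (simp_all add: distQ_nonneg e0)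
  define t where "t = 1 / (3 * (\<bar>B\<bar> + 1))"
  have t0: "t > 0" unfolding t_def by (simp add: add_pos_nonneg)
  have ev1: "\<forall>\<^sub>F i in sequentially. distQ (P i) < 1/2" using lim by (rule order_tendstoD) simp
  have ev2: "\<forall>\<^sub>F i in sequentially. distQ (P i) powr e < t" using lim2 t0 by (rule order_tendstoD)
  obtain i where i1: "distQ (P i) < 1/2" and i2: "distQ (P i) powr e < t"
    using eventually_happens'[OF sequentially_bot eventually_conj[OF ev1 ev2]] by blast
  define d where "d = distQ (P i)"
  have d0: "d > 0" using distQ_pos P d_def by blast
  have low: "d^2 * height (P i) \<ge> 1/3" using lower[of "P i"] P i1 d_def by simp
  have de: "d powr e > 0" using d0 by simp
  have "d powr \<gamma> = d powr 2 / d powr e" unfolding e_def by (simp add: powr_diff)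
  also have "\<dots> = d^2 / d powr e" using d0 by (simp add: powr_numeral)
  finally have dg: "d powr \<gamma> * height (P i) = (d^2 * height (P i)) / d powr e" by simp
  have "(d^2 * height (P i)) / d powr e \<ge> (1/3) / d powr e" by (rule divide_right_mono[OF low]) (use de in linarith)
  moreover have "(1/3) / d powr e > (1/3) / t" using de i2 t0 unfolding d_def by (intro divide_strict_left_mono) (simp_all add: mult_pos_pos)
  moreover have "(1/3) / t = \<bar>B\<bar> + 1" unfolding t_def by simp
  ultimately have "d powr \<gamma> * height (P i) > B" using dg by linarith
  thus False using B d_def by (simp add: not_le[symmetric])
qed

lemma alpha_ge: "alpha V \<ge> 2"
  unfolding alpha_Gam
proof (rule Inf_greatest)
  fix x assume "x \<in> ereal ` Gam V"
  then obtain g where "g \<in> Gam V" "x = ereal g" by blast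
  thus "2 \<le> x" using Gam_ge by simp
qed

lemma alpha_le: "f \<noteq> 0 \<Longrightarrow> alpha {p \<in> chart_pts. eval2 f p \<noteq> 0} \<le> 2"
proof -
  assume "f \<noteq> 0"
  hence "ereal 2 \<in> ereal ` Gam {p \<in> chart_pts. eval2 f p \<noteq> 0}" by (intro imageI two_in_Gam)
  hence "Inf (ereal ` Gam {p \<in> chart_pts. eval2 f p \<noteq> 0}) \<le> ereal 2" by (rule Inf_lower)
  thus ?thesis unfolding alpha_Gam by simp
qed

lemma alpha_eq: "f \<noteq> 0 \<Longrightarrow> alpha {p \<in> chart_pts. eval2 f p \<noteq> 0} = 2"
  by (intro order_antisym alpha_le alpha_ge)

lemma alpha_chart: "alpha chart_pts = 2"
proof -
  have "chart_pts = {p \<in> chart_pts. eval2 1 p \<noteq> 0}" unfolding eval2_def by simp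
  thus ?thesis using alpha_eq[of 1] by simp
qed

lemma alpha_ess_eq: "alpha_ess = 2"
proof -
  have "alpha_ess = (SUP f \<in> {f :: rat poly poly. f \<noteq> 0}. (2::ereal))"
    unfolding alpha_ess_def by (rule SUP_cong) (simp_all add: alpha_eq)
  also have "\<dots> = 2"
  proof (rule SUP_const)
    show "{f :: rat poly poly. f \<noteq> 0} \<noteq> {}" using one_neq_zero by blast
  qed
  finally show ?thesis .
qed

theorem mainTheorem1:
  shows "alpha chart_pts = 2 \<and> alpha_ess = 2 \<and> \<not> (\<exists>Z. locally_accumulating Z)"
proof (intro conjI)
  show "alpha chart_pts = 2" by (rule alpha_chart)
  show "alpha_ess = 2" by (rule alpha_ess_eq)
  show "\<not> (\<exists>Z. locally_accumulating Z)"
  proof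
    assume "\<exists>Z. locally_accumulating Z"
    then obtain Z where Z: "subvariety Z" "\<forall>W. dense_open_in W Z \<longrightarrow> alpha W < alpha_ess"
      unfolding locally_accumulating_def by blast
    have Zc: "Z \<subseteq> chart_pts" using Z(1) unfolding subvariety_def zclosed_def by blast
    have "chart_pts - chart_pts = {p \<in> chart_pts. \<forall>f\<in>{1 :: rat poly poly}. eval2 f p = 0}"
      by (simp add: eval2_def)
    hence zo: "zopen chart_pts"
      unfolding zopen_def zclosed_def by blast
    have "Z = Z \<inter> chart_pts" using Zc by blast
    hence "dense_open_in Z Z"
      unfolding dense_open_in_def using zo by (intro conjI exI[of _ chart_pts] allI impI) simp_all
    hence "alpha Z < alpha_ess" using Z(2) by blast
    thus False using alpha_ge[of Z] alpha_ess_eq by simp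
  qed
qed


end
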